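(* Let $\psi:\mathbb{N}\to(0,\infty)$ satisfy: (I) there exists $c>0$ such that for all $n\ge1$ and all integers $k\in[n,2n]$, $\psi(k)=\psi(n)\{1+O((\log n)^{-c})\}$; (II) there exists $\epsilon>0$ such that for all $n\ge1$, $\psi(2n)=\psi(n)\Big\{1-\frac{\log 2}{2\log n}+O\big((\log n)^{-1-\epsilon}\big)\Big\}$. Set $\delta=\min\{c,\epsilon\}$. Then there exists $a>0$ such that $$\psi(n)=a(\log n)^{-1/2}\Big\{1+O\big((\log n)^{-\delta}\big)\Big\}.$$ *)

theory Defs
  imports Complex_Main
begin

end

theory Submission
  imports Defs
begin


lemma fin_exc:
  fixes f g :: "nat \<Rightarrow> real"
  assumes "\<forall>n\<ge>N. \<bar>f n\<bar> \<le> K * g n" "\<forall>n\<ge>2. g n > 0"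
  shows "\<exists>K'. \<forall>n\<ge>2. \<bar>f n\<bar> \<le> K' * g n"
proof -
  define M where "M = Max (insert 0 ((\<lambda>n. \<bar>f n\<bar> / g n) ` {2..<N}))"
  have "\<forall>n\<ge>2. \<bar>f n\<bar> \<le> max K M * g n"
  proof (intro allI impI)
    fix n :: nat assume n: "n \<ge> 2"
    have gp: "g n > 0" using assms(2) n by auto
    show "\<bar>f n\<bar> \<le> max K M * g n"
    proof (cases "n \<ge> N")
      case True
      then have "\<bar>f n\<bar> \<le> K * g n" using assms(1) by auto
      also have "\<dots> \<le> max K M * g n" using gp by (intro mult_right_mono) auto
      finally show ?thesis .
    next
      case False
      then have "\<bar>f n\<bar> / g n \<le> M" unfolding M_def using n by (intro Max_ge) auto
      then have "\<bar>f n\<bar> \<le> M * g n" using gp by (simp add: field_simps)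
      also have "\<dots> \<le> max K M * g n" using gp by (intro mult_right_mono) auto
      finally show ?thesis .
    qed
  qed
  then show ?thesis by blast
qed

lemma ln_large: "\<exists>N::nat. \<forall>n\<ge>N. ln (real n) \<ge> X"
proof -
  define N where "N = nat \<lceil>exp X\<rceil>"
  have "\<forall>n\<ge>N. ln (real n) \<ge> X"
  proof (intro allI impI)
    fix n assume "n \<ge> N"
    then have "real n \<ge> exp X" unfolding N_def by linarith
    then have "ln (real n) \<ge> ln (exp X)" by (intro ln_mono) auto
    then show "ln (real n) \<ge> X" by simp
  qed
  then show ?thesis by blast
qed

lemma mvt_powr:
  fixes y L d :: real
  assumes "y > 0" "L > 0" "d > 0"
  shows "d * L * (y + L) powr (-1-d) \<le> y powr (-d) - (y + L) powr (-d)"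
proof -
  have "\<And>x. y \<le> x \<Longrightarrow> x \<le> y + L \<Longrightarrow> DERIV (\<lambda>z. z powr (-d)) x :> (-d) * x powr (-d - 1)"
    using assms by (intro has_real_derivative_powr) auto
  from MVT2[of y "y+L", OF _ this] assms obtain z where z: "y < z" "z < y + L"
    "(y+L) powr (-d) - y powr (-d) = L * ((-d) * z powr (-d - 1))" by auto
  have "(y + L) powr (-1-d) \<le> z powr (-1-d)" using z assms by (intro powr_mono2') auto
  then have "d * L * (y + L) powr (-1-d) \<le> d * L * z powr (-1-d)" using assms by (intro mult_left_mono) auto
  also have "\<dots> = y powr (-d) - (y + L) powr (-d)" proof -
    have e: "-d - 1 = -1 - d" by simp
    show ?thesis using z(3) unfolding e by (simp add: algebra_simps)
  qed
  finally show ?thesis .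
qed

lemma series_bound:
  fixes x L d :: real
  assumes "x > 0" "L > 0" "d > 0"
  shows "summable (\<lambda>i. (x + real i * L) powr (-1-d)) \<and>
     (\<Sum>i. (x + real i * L) powr (-1-d)) \<le> x powr (-1-d) + x powr (-d) / (d * L)"
proof -
  define T where "T i = (x + real i * L) powr (-d) / (d * L)" for i
  have lim: "(\<lambda>i. (x + real i * L) powr (-d)) \<longlonglongrightarrow> 0"
  proof (rule tendsto_neg_powr)
    show "-d < 0" using assms by simp
    have "filterlim (\<lambda>i. L * real i) at_top sequentially"
      using assms by (intro filterlim_tendsto_pos_mult_at_top[OF tendsto_const] filterlim_real_sequentially) auto
    then have "filterlim (\<lambda>i. x + L * real i) at_top sequentially"
      by (intro filterlim_tendsto_add_at_top[OF tendsto_const])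
    then show "filterlim (\<lambda>i. x + real i * L) at_top sequentially"
      by (simp add: mult.commute)
  qed
  have T0: "T \<longlonglongrightarrow> 0" unfolding T_def using tendsto_divide[OF lim tendsto_const, of "d*L"] assms by simp
  have tel: "(\<lambda>i. T i - T (Suc i)) sums (T 0)" using telescope_sums'[OF T0] by simp
  have le: "(x + real (Suc i) * L) powr (-1-d) \<le> T i - T (Suc i)" for i
  proof -
    have "d * L * ((x + real i * L) + L) powr (-1-d) \<le> (x + real i * L) powr (-d) - ((x + real i * L) + L) powr (-d)"
      using assms by (intro mvt_powr) (auto intro!: add_pos_nonneg)
    then show ?thesis unfolding T_def using assms
      by (simp add: field_simps)
  qed
  have nn: "0 \<le> (x + real (Suc i) * L) powr (-1-d)" for i by simp
  have s1: "summable (\<lambda>i. (x + real (Suc i) * L) powr (-1-d))"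
    by (rule summable_comparison_test[OF _ sums_summable[OF tel]]) (use le nn in auto)
  have "(\<Sum>i. (x + real (Suc i) * L) powr (-1-d)) \<le> (\<Sum>i. T i - T (Suc i))"
    by (rule suminf_le[OF le s1 sums_summable[OF tel]])
  also have "\<dots> = T 0" using tel sums_unique by metis
  finally have b: "(\<Sum>i. (x + real (Suc i) * L) powr (-1-d)) \<le> T 0" .
  have s: "summable (\<lambda>i. (x + real i * L) powr (-1-d))" using s1 summable_Suc_iff by blast
  have "(\<Sum>i. (x + real i * L) powr (-1-d)) = (\<Sum>i. (x + real (Suc i) * L) powr (-1-d)) + x powr (-1-d)"
    using suminf_split_head[OF s] by simp
  with b s show ?thesis unfolding T_def by simp
qed



lemma exp_sub_one_bound: fixes t :: real shows "\<bar>exp t - 1\<bar> \<le> \<bar>t\<bar> * exp \<bar>t\<bar>"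
proof (cases "t \<ge> 0")
  case True
  have "1 - t \<le> exp (-t)" using exp_ge_add_one_self[of "-t"] by simp
  then have "exp t * (1 - t) \<le> exp t * exp (-t)" by (intro mult_left_mono) auto
  then have "exp t * (1 - t) \<le> 1" by (simp add: exp_minus field_simps)
  moreover have "exp t \<ge> 1" using True by simp
  ultimately show ?thesis using True by (simp add: algebra_simps)
next
  case False
  have "1 + t \<le> exp t" by simp
  moreover have "exp t \<le> 1" using False by simp
  moreover have "exp \<bar>t\<bar> \<ge> 1" by simp
  ultimately have "\<bar>exp t - 1\<bar> \<le> \<bar>t\<bar>" using False by linarith
  also have "\<dots> \<le> \<bar>t\<bar> * exp \<bar>t\<bar>" using \<open>exp \<bar>t\<bar> \<ge> 1\<close> by (simp add: mult_le_cancel_left1)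
  finally show ?thesis .
qed

lemma d_arith:
  fixes l L C e :: real
  assumes l1: "l \<ge> 1" and l2: "l \<ge> 2 * L" and l3: "l \<ge> 4 * \<bar>C\<bar>" and L: "L > 0"
    and e: "\<bar>e\<bar> \<le> \<bar>C\<bar> / l"
  shows "\<bar>ln (1 + (- L / (2 * l) + e)) + ln (1 + L / l) / 2\<bar> \<le> \<bar>e\<bar> + (2 * L\<^sup>2 + 4 * C\<^sup>2) / l\<^sup>2"
proof -
  define u where "u = - L / (2 * l) + e"
  define v where "v = L / l"
  have lp: "l > 0" using l1 by simp
  have "L / (2 * l) \<le> 1/4" using l2 lp L by (simp add: field_simps)
  moreover have "\<bar>C\<bar> / l \<le> 1/4" using l3 lp by (simp add: field_simps)
  moreover have "L / (2 * l) \<ge> 0" using L lp by simp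
  ultimately have u: "\<bar>u\<bar> \<le> 1/2" proof -
    have "\<bar>u\<bar> \<le> \<bar>- L / (2 * l)\<bar> + \<bar>e\<bar>" unfolding u_def by (rule abs_triangle_ineq)
    also have "\<bar>- L / (2 * l)\<bar> = L / (2 * l)" using L lp by simp
    finally show ?thesis using e \<open>L / (2 * l) \<le> 1/4\<close> \<open>\<bar>C\<bar> / l \<le> 1/4\<close> by linarith
  qed
  have v: "\<bar>v\<bar> \<le> 1/2" unfolding v_def using l2 lp L by (simp add: field_simps)
  have bu: "\<bar>ln (1 + u) - u\<bar> \<le> 2 * u\<^sup>2" by (rule abs_ln_one_plus_x_minus_x_bound[OF u])
  have bv: "\<bar>ln (1 + v) - v\<bar> \<le> 2 * v\<^sup>2" by (rule abs_ln_one_plus_x_minus_x_bound[OF v])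
  have e2: "e\<^sup>2 \<le> C\<^sup>2 / l\<^sup>2"
  proof -
    have "e\<^sup>2 = \<bar>e\<bar>\<^sup>2" by simp
    also have "\<dots> \<le> (\<bar>C\<bar> / l)\<^sup>2" using e by (intro power_mono) auto
    finally show ?thesis by (simp add: power_divide)
  qed
  have u2: "u\<^sup>2 \<le> 2 * ((L / (2 * l))\<^sup>2 + e\<^sup>2)"
  proof -
    have "0 \<le> (- L / (2 * l) - e)\<^sup>2" by simp
    then show ?thesis unfolding u_def power2_diff power2_sum by simp
  qed
  have "(L / (2 * l))\<^sup>2 = L\<^sup>2 / (4 * l\<^sup>2)" by (simp add: power_divide power_mult_distrib)
  have "\<bar>ln (1 + u) + ln (1 + v) / 2\<bar> = \<bar>e + (ln (1 + u) - u) + (ln (1 + v) - v) / 2\<bar>"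
    unfolding u_def v_def by (simp add: field_simps)
  also have "\<dots> \<le> \<bar>e\<bar> + 2 * u\<^sup>2 + v\<^sup>2" 
  proof -
    have g: "\<And>a b p q::real. \<bar>a\<bar> \<le> p \<Longrightarrow> \<bar>b\<bar> \<le> q \<Longrightarrow> \<bar>e + a + b/2\<bar> \<le> \<bar>e\<bar> + p + q/2" by arith
    show ?thesis using g[OF bu bv] by simp
  qed
  also have "\<dots> \<le> \<bar>e\<bar> + (2 * L\<^sup>2 + 4 * C\<^sup>2) / l\<^sup>2"
  proof -
    have "2 * u\<^sup>2 \<le> L\<^sup>2 / l\<^sup>2 + 4 * C\<^sup>2 / l\<^sup>2" using u2 e2 \<open>(L / (2 * l))\<^sup>2 = L\<^sup>2 / (4 * l\<^sup>2)\<close> by simp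
    moreover have "v\<^sup>2 = L\<^sup>2 / l\<^sup>2" unfolding v_def by (simp add: power_divide)
    ultimately show ?thesis by (simp add: add_divide_distrib)
  qed
  finally show ?thesis unfolding u_def v_def .
qed



lemma lin_at_top:
  fixes x L :: real assumes "L > 0"
  shows "filterlim (\<lambda>i. x + real i * L) at_top sequentially"
proof -
  have "filterlim (\<lambda>i. L * real i) at_top sequentially"
    using assms by (intro filterlim_tendsto_pos_mult_at_top[OF tendsto_const] filterlim_real_sequentially) auto
  then have "filterlim (\<lambda>i. x + L * real i) at_top sequentially"
    by (intro filterlim_tendsto_add_at_top[OF tendsto_const])
  then show ?thesis by (simp add: mult.commute)
qed

lemma ln_tendsto_zero:
  fixes z b :: "nat \<Rightarrow> real"
  assumes "b \<longlonglongrightarrow> 0" "\<And>j. \<bar>z j - 1\<bar> \<le> b j"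
  shows "(\<lambda>j. ln (z j)) \<longlonglongrightarrow> 0"
proof -
  have "(\<lambda>j. z j - 1) \<longlonglongrightarrow> 0"
  proof (rule tendsto_sandwich[of "\<lambda>j. - b j" _ _ b])
    have "- b n \<le> z n - 1" for n using assms(2)[of n] by (auto simp: abs_le_iff)
    then show "\<forall>\<^sub>F n in sequentially. - b n \<le> z n - 1" by auto
    show "\<forall>\<^sub>F n in sequentially. z n - 1 \<le> b n" using assms(2) by (auto simp: abs_le_iff)
    show "(\<lambda>j. - b j) \<longlonglongrightarrow> 0" using tendsto_minus[OF assms(1)] by simp
  qed (use assms(1) in auto)
  then have "z \<longlonglongrightarrow> 1" by (rule LIM_zero_cancel)
  then have "(\<lambda>j. ln (z j)) \<longlonglongrightarrow> ln 1" by (rule tendsto_ln) simp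
  then show ?thesis by simp
qed

lemma ln_pow2_mult:
  assumes "m \<ge> 1"
  shows "ln (real (2 ^ i * m)) = ln (real m) + real i * ln 2"
proof -
  have "ln (real (2 ^ i * m)) = ln (2 ^ i * real m)" by simp
  also have "\<dots> = ln (2 ^ i) + ln (real m)" using assms by (simp add: ln_mult)
  also have "ln ((2::real) ^ i) = real i * ln 2" by (simp add: ln_realpow)
  finally show ?thesis by simp
qed



theorem lemma3p1:
  fixes \<psi> :: "nat \<Rightarrow> real" and c \<epsilon> :: real
  assumes pos: "\<And>n. \<psi> n > 0"
    and c_pos: "c > 0"
    and I: "\<exists>C. \<forall>n\<ge>2. \<forall>k. n \<le> k \<and> k \<le> 2 * n \<longrightarrow>
              \<bar>\<psi> k / \<psi> n - 1\<bar> \<le> C * ln (real n) powr (- c)"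
    and eps_pos: "\<epsilon> > 0"
    and II: "\<exists>C. \<forall>n\<ge>2.
              \<bar>\<psi> (2 * n) / \<psi> n - (1 - ln 2 / (2 * ln (real n)))\<bar>
                \<le> C * ln (real n) powr (- 1 - \<epsilon>)"
  shows "\<exists>a > 0. \<exists>C. \<forall>n\<ge>2.
           \<bar>\<psi> n / (a * ln (real n) powr (- 1 / 2)) - 1\<bar>
             \<le> C * ln (real n) powr (- min c \<epsilon>)"
proof -
  obtain C1 where C1: "\<forall>n\<ge>2. \<forall>k. n \<le> k \<and> k \<le> 2 * n \<longrightarrow>
              \<bar>\<psi> k / \<psi> n - 1\<bar> \<le> C1 * ln (real n) powr (- c)" using I by blast
  obtain C2 where C2: "\<forall>n\<ge>2.
              \<bar>\<psi> (2 * n) / \<psi> n - (1 - ln 2 / (2 * ln (real n)))\<bar>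
                \<le> C2 * ln (real n) powr (- 1 - \<epsilon>)" using II by blast
  define L :: real where "L = ln 2"
  define \<delta> where "\<delta> = min c \<epsilon>"
  have Lpos: "L > 0" unfolding L_def by simp
  have dpos: "\<delta> > 0" unfolding \<delta>_def using c_pos eps_pos by simp
  have lnge: "ln (real n) \<ge> L" if "n \<ge> 2" for n
    unfolding L_def using that by (intro ln_mono) auto
  have lnpos: "ln (real n) > 0" if "n \<ge> 2" for n using lnge[OF that] Lpos by linarith
  have ln2n: "ln (real (2 * n)) = L + ln (real n)" if "n \<ge> 1" for n
    using ln_pow2_mult[OF that, of 1] unfolding L_def by simp
  have c_le: "c \<le> 1"
  proof (rule ccontr)
    assume "\<not> c \<le> 1"
    then have c1: "c > 1" by simp
    have lnat: "filterlim (\<lambda>n. ln (real n)) at_top sequentially"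
      by (rule filterlim_compose[OF ln_at_top filterlim_real_sequentially])
    have "(\<lambda>n. C1 * ln (real n) powr (1 - c) + C2 * ln (real n) powr (- \<epsilon>)) \<longlonglongrightarrow> C1 * 0 + C2 * 0"
      using c1 eps_pos by (intro tendsto_add tendsto_mult tendsto_const tendsto_neg_powr lnat) auto
    then have "eventually (\<lambda>n. C1 * ln (real n) powr (1 - c) + C2 * ln (real n) powr (- \<epsilon>) < L / 2) sequentially"
      using Lpos by (intro order_tendstoD(2)) auto
    then obtain N where N: "\<forall>n\<ge>N. C1 * ln (real n) powr (1 - c) + C2 * ln (real n) powr (- \<epsilon>) < L / 2"
      unfolding eventually_sequentially by blast
    define n where "n = max N 2"
    have n2: "n \<ge> 2" and nN: "n \<ge> N" unfolding n_def by auto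
    define l where "l = ln (real n)"
    have lp: "l > 0" unfolding l_def using lnpos[OF n2] .
    define \<rho> where "\<rho> = \<psi> (2 * n) / \<psi> n"
    have h1: "\<bar>\<rho> - 1\<bar> \<le> C1 * l powr (- c)" unfolding \<rho>_def l_def using C1 n2 by auto
    have h2: "\<bar>\<rho> - (1 - L / (2 * l))\<bar> \<le> C2 * l powr (- 1 - \<epsilon>)" unfolding \<rho>_def l_def L_def using C2 n2 by auto
    have "L / (2 * l) \<le> C1 * l powr (- c) + C2 * l powr (- 1 - \<epsilon>)" using h1 h2 by linarith
    then have "l * (L / (2 * l)) \<le> l * (C1 * l powr (- c) + C2 * l powr (- 1 - \<epsilon>))"
      using lp by (intro mult_left_mono) auto
    also have "l * (C1 * l powr (- c) + C2 * l powr (- 1 - \<epsilon>)) = C1 * l powr (1 - c) + C2 * l powr (- \<epsilon>)"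
    proof -
      have a: "l * l powr (- c) = l powr (1 - c)" using lp powr_add[of l 1 "-c"] by simp
      have b: "l * l powr (- 1 - \<epsilon>) = l powr (- \<epsilon>)" using lp powr_add[of l 1 "-1-\<epsilon>"] by simp
      show ?thesis using a b by (simp add: algebra_simps)
    qed
    finally have "L / 2 \<le> C1 * l powr (1 - c) + C2 * l powr (- \<epsilon>)" using lp by simp
    with N nN show False unfolding l_def by force
  qed
  have d_le1: "\<delta> \<le> 1" unfolding \<delta>_def using c_le by simp
  define h where "h n = ln (\<psi> n) + ln (ln (real n)) / 2" for n
  have "\<exists>K. \<forall>n\<ge>2. \<bar>h (2 * n) - h n\<bar> \<le> K * ln (real n) powr (-1-\<delta>)"
  proof -
    obtain N where N: "\<forall>n\<ge>N. ln (real n) \<ge> max 1 (max (2*L) (4*\<bar>C2\<bar>))" using ln_large by blast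
    define M where "M = 2 * L\<^sup>2 + 4 * C2\<^sup>2"
    have "\<forall>n\<ge>max N 2. \<bar>h (2 * n) - h n\<bar> \<le> (\<bar>C2\<bar> + M) * ln (real n) powr (-1-\<delta>)"
    proof (intro allI impI)
      fix n assume n: "n \<ge> max N 2"
      then have n2: "n \<ge> 2" by simp
      define l where "l = ln (real n)"
      have l1: "l \<ge> 1" and l2: "l \<ge> 2 * L" and l3: "l \<ge> 4 * \<bar>C2\<bar>" using N n unfolding l_def by auto
      have lp: "l > 0" using l1 by simp
      define e where "e = \<psi> (2 * n) / \<psi> n - (1 - L / (2 * l))"
      have e0: "\<bar>e\<bar> \<le> C2 * l powr (-1-\<epsilon>)" unfolding e_def l_def L_def using C2 n2 by auto
      have pe: "l powr (-1-\<epsilon>) \<le> l powr (-1-\<delta>)" using l1 unfolding \<delta>_def by (intro powr_mono) auto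
      have pe1: "l powr (-1-\<epsilon>) \<le> l powr (-1)" using l1 eps_pos by (intro powr_mono) auto
      have "C2 * l powr (-1-\<epsilon>) \<le> \<bar>C2\<bar> * l powr (-1-\<epsilon>)" by (intro mult_right_mono) auto
      then have e1: "\<bar>e\<bar> \<le> \<bar>C2\<bar> * l powr (-1-\<epsilon>)" using e0 by linarith
      have "\<bar>C2\<bar> * l powr (-1-\<epsilon>) \<le> \<bar>C2\<bar> * l powr (-1)" using pe1 by (intro mult_left_mono) auto
      then have e2: "\<bar>e\<bar> \<le> \<bar>C2\<bar> / l" using e1 lp by (simp add: powr_minus divide_inverse)
      have "h (2 * n) - h n = ln (1 + (- L / (2 * l) + e)) + ln (1 + L / l) / 2"
      proof -
        have "ln (\<psi> (2 * n)) - ln (\<psi> n) = ln (\<psi> (2 * n) / \<psi> n)" using pos[of n] pos[of "2*n"] by (simp add: ln_div)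
        also have "\<psi> (2 * n) / \<psi> n = 1 + (- L / (2 * l) + e)" unfolding e_def by simp
        finally have A: "ln (\<psi> (2 * n)) - ln (\<psi> n) = ln (1 + (- L / (2 * l) + e))" .
        have "ln (ln (real (2 * n))) - ln (ln (real n)) = ln (L + l) - ln l" using ln2n[of n] n2 unfolding l_def by simp
        also have "\<dots> = ln ((L + l) / l)" using lp Lpos by (simp add: ln_div)
        also have "(L + l) / l = 1 + L / l" using lp by (simp add: field_simps)
        finally have B: "ln (ln (real (2 * n))) - ln (ln (real n)) = ln (1 + L / l)" .
        show ?thesis unfolding h_def using A B by (simp add: field_simps)
      qed
      also have "\<bar>\<dots>\<bar> \<le> \<bar>e\<bar> + M / l\<^sup>2" unfolding M_def using d_arith[OF l1 l2 l3 Lpos e2] .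
      also have "\<dots> \<le> \<bar>C2\<bar> * l powr (-1-\<delta>) + M * l powr (-1-\<delta>)"
      proof -
        have "\<bar>C2\<bar> * l powr (-1-\<epsilon>) \<le> \<bar>C2\<bar> * l powr (-1-\<delta>)" using pe by (intro mult_left_mono) auto
        moreover have "M / l\<^sup>2 \<le> M * l powr (-1-\<delta>)"
        proof -
          have "l powr (-2) \<le> l powr (-1-\<delta>)" using l1 d_le1 by (intro powr_mono) auto
          moreover have "l powr (-2) = 1 / l\<^sup>2" using lp by (simp add: powr_minus divide_inverse)
          moreover have "M \<ge> 0" unfolding M_def by simp
          ultimately show ?thesis by (metis mult_left_mono times_divide_eq_right mult.right_neutral)
        qed
        ultimately show ?thesis using e1 by linarith
      qed
      finally show "\<bar>h (2 * n) - h n\<bar> \<le> (\<bar>C2\<bar> + M) * ln (real n) powr (-1-\<delta>)"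
        unfolding l_def by (simp add: algebra_simps)
    qed
    moreover have "\<forall>n\<ge>2. ln (real n) powr (-1-\<delta>) > 0" using lnpos by auto
    ultimately show ?thesis by (rule fin_exc)
  qed
  then obtain K where K: "\<forall>n\<ge>2. \<bar>h (2 * n) - h n\<bar> \<le> K * ln (real n) powr (-1-\<delta>)" by blast
  have K0: "K \<ge> 0"
  proof -
    have "0 \<le> K * ln (real (2::nat)) powr (-1-\<delta>)" using K[rule_format, of 2] by linarith
    moreover have "ln (real (2::nat)) powr (-1-\<delta>) > 0" using lnpos[of 2] by simp
    ultimately show ?thesis by (simp add: zero_le_mult_iff)
  qed
  define d where "d n = h (2 * n) - h n" for n
  define K3 where "K3 = K * (1 / L + 1 / (\<delta> * L))"
  have hsum: "h (2 ^ j * m) = h m + (\<Sum>i<j. d (2 ^ i * m))" for j m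
    by (induction j) (simp_all add: d_def mult.assoc)
  have tail: "summable (\<lambda>i. d (2 ^ i * m)) \<and> \<bar>\<Sum>i. d (2 ^ i * m)\<bar> \<le> K3 * ln (real m) powr (-\<delta>)"
    if m: "m \<ge> 2" for m
  proof -
    define x where "x = ln (real m)"
    have xL: "x \<ge> L" unfolding x_def using lnge[OF m] .
    have xp: "x > 0" using xL Lpos by linarith
    from series_bound[OF xp Lpos dpos]
    have sb: "summable (\<lambda>i. (x + real i * L) powr (-1-\<delta>))"
      "(\<Sum>i. (x + real i * L) powr (-1-\<delta>)) \<le> x powr (-1-\<delta>) + x powr (-\<delta>) / (\<delta> * L)" by auto
    define g where "g i = K * (x + real i * L) powr (-1-\<delta>)" for i
    have gs: "summable g" unfolding g_def by (rule summable_mult[OF sb(1)])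
    have dg: "\<bar>d (2 ^ i * m)\<bar> \<le> g i" for i
    proof -
      have "2 ^ i * m \<ge> 2" using m by (metis le_trans mult_le_mono1 one_le_power one_le_numeral mult_1)
      then have "\<bar>d (2 ^ i * m)\<bar> \<le> K * ln (real (2 ^ i * m)) powr (-1-\<delta>)" using K unfolding d_def by blast
      also have "ln (real (2 ^ i * m)) = x + real i * L" unfolding x_def L_def using m by (intro ln_pow2_mult) auto
      finally show ?thesis unfolding g_def .
    qed
    have ds: "summable (\<lambda>i. d (2 ^ i * m))"
      by (rule summable_comparison_test[OF _ gs]) (use dg in auto)
    have "(\<Sum>i. d (2 ^ i * m)) \<le> suminf g" by (rule suminf_le[OF _ ds gs]) (use dg in \<open>auto simp: abs_le_iff\<close>)
    moreover have "(\<Sum>i. - d (2 ^ i * m)) \<le> suminf g" by (rule suminf_le[OF _ summable_minus[OF ds] gs]) (use dg in \<open>auto simp: abs_le_iff\<close>)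
    ultimately have ab: "\<bar>\<Sum>i. d (2 ^ i * m)\<bar> \<le> suminf g" using suminf_minus[OF ds] by linarith
    have "suminf g = K * (\<Sum>i. (x + real i * L) powr (-1-\<delta>))" unfolding g_def by (rule suminf_mult[OF sb(1)])
    also have "\<dots> \<le> K * (x powr (-1-\<delta>) + x powr (-\<delta>) / (\<delta> * L))" using K0 sb(2) by (intro mult_left_mono) auto
    also have "\<dots> \<le> K3 * x powr (-\<delta>)"
    proof -
      have "x powr (-1-\<delta>) = x powr (-1) * x powr (-\<delta>)" using powr_add[of x "-1" "-\<delta>"] by simp
      also have "\<dots> = x powr (-\<delta>) / x" using xp by (simp add: powr_minus divide_inverse)
      also have "\<dots> \<le> x powr (-\<delta>) / L" using xL Lpos by (intro divide_left_mono) auto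
      finally have "x powr (-1-\<delta>) + x powr (-\<delta>) / (\<delta> * L) \<le> (1 / L + 1 / (\<delta> * L)) * x powr (-\<delta>)"
        by (simp add: algebra_simps)
      then show ?thesis unfolding K3_def using K0 by (metis mult.assoc mult_left_mono)
    qed
    finally show ?thesis using ab ds unfolding x_def by simp
  qed
  define A where "A m = h m + (\<Sum>i. d (2 ^ i * m))" for m
  have conv: "(\<lambda>j. h (2 ^ j * m)) \<longlonglongrightarrow> A m" if m: "m \<ge> 2" for m
    unfolding hsum A_def using tail[OF m] by (intro tendsto_add tendsto_const summable_LIMSEQ) auto
  have pow2ge: "2 ^ j * m \<ge> 2" if "m \<ge> 2" for j m :: nat
    using that by (metis le_trans mult_le_mono1 one_le_power one_le_numeral mult_1)
  have Astep: "A (Suc n) = A n" if n: "n \<ge> 2" for n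
  proof -
    define y where "y j = ln (real n) + real j * L" for j
    have yL: "y j \<ge> L" for j proof -
      have "real j * L \<ge> 0" using Lpos by simp
      then show ?thesis unfolding y_def using lnge[OF n] by linarith
    qed
    have yp: "y j > 0" for j using yL[of j] Lpos by linarith
    have yeq: "ln (real (2 ^ j * n)) = y j" for j unfolding y_def L_def using n by (intro ln_pow2_mult) auto
    have yeq': "ln (real (2 ^ j * Suc n)) = ln (real (Suc n)) + real j * L" for j unfolding L_def by (intro ln_pow2_mult) auto
    have ytop: "filterlim y at_top sequentially" unfolding y_def using Lpos by (rule lin_at_top)
    define q where "q j = \<psi> (2 ^ j * Suc n) / \<psi> (2 ^ j * n)" for j
    define w where "w j = ln (real (2 ^ j * Suc n)) / y j" for j
    have heq: "h (2 ^ j * Suc n) - h (2 ^ j * n) = ln (q j) + ln (w j) / 2" for j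
    proof -
      have "ln (\<psi> (2 ^ j * Suc n)) - ln (\<psi> (2 ^ j * n)) = ln (q j)" unfolding q_def
        using pos[of "2 ^ j * n"] pos[of "2 ^ j * Suc n"] by (simp add: ln_div)
      moreover have "ln (ln (real (2 ^ j * Suc n))) - ln (ln (real (2 ^ j * n))) = ln (w j)"
      proof -
        have "ln (real (2 ^ j * Suc n)) > 0" using lnpos[of "2 ^ j * Suc n"] pow2ge[of "Suc n" j] n by simp
        then show ?thesis unfolding w_def yeq using yp[of j] by (simp add: ln_div)
      qed
      ultimately show ?thesis unfolding h_def by (simp add: field_simps)
    qed
    have q0: "(\<lambda>j. ln (q j)) \<longlonglongrightarrow> 0"
    proof (rule ln_tendsto_zero)
      show "(\<lambda>j. C1 * y j powr (-c)) \<longlonglongrightarrow> 0"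
      proof -
        have "(\<lambda>j. y j powr (-c)) \<longlonglongrightarrow> 0" by (rule tendsto_neg_powr[OF _ ytop]) (use c_pos in simp)
        from tendsto_mult[OF tendsto_const this, of C1] show ?thesis by simp
      qed
      fix j
      have "2 ^ j * Suc n \<le> 2 * (2 ^ j * n)" using n by simp
      moreover have "2 ^ j * n \<le> 2 ^ j * Suc n" by simp
      ultimately show "\<bar>q j - 1\<bar> \<le> C1 * y j powr (-c)" unfolding q_def yeq[symmetric]
        using C1 pow2ge[OF n, of j] by blast
    qed
    have w0: "(\<lambda>j. ln (w j)) \<longlonglongrightarrow> 0"
    proof (rule ln_tendsto_zero)
      show "(\<lambda>j. L / y j) \<longlonglongrightarrow> 0"
        by (rule tendsto_divide_0[OF tendsto_const filterlim_at_top_imp_at_infinity[OF ytop]])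
      fix j
      have a: "ln (real n) \<le> ln (real (Suc n))" using n by (intro ln_mono) auto
      have b: "ln (real (Suc n)) \<le> L + ln (real n)"
      proof -
        have "ln (real (Suc n)) \<le> ln (real (2 * n))" using n by (intro ln_mono) auto
        moreover have "ln (real (2 * n)) = L + ln (real n)" using ln2n[of n] n by simp
        ultimately show ?thesis by linarith
      qed
      have "w j - 1 = (ln (real (Suc n)) - ln (real n)) / y j"
        unfolding w_def yeq' using yp[of j] by (simp add: field_simps y_def)
      moreover have "\<bar>(ln (real (Suc n)) - ln (real n)) / y j\<bar> \<le> L / y j"
        using a b yp[of j] by (simp add: divide_right_mono)
      ultimately show "\<bar>w j - 1\<bar> \<le> L / y j" by simp
    qed
    have "(\<lambda>j. h (2 ^ j * Suc n) - h (2 ^ j * n)) \<longlonglongrightarrow> 0 + 0 / 2"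
      unfolding heq by (intro tendsto_add tendsto_divide q0 w0 tendsto_const) auto
    moreover have "(\<lambda>j. h (2 ^ j * Suc n) - h (2 ^ j * n)) \<longlonglongrightarrow> A (Suc n) - A n"
      using n by (intro tendsto_diff conv) auto
    ultimately show ?thesis using LIMSEQ_unique by fastforce
  qed
  have Aconst: "A n = A 2" if "n \<ge> 2" for n
    using that
  proof (induction n rule: nat_induct_at_least)
    case base then show ?case by simp
  next
    case (Suc n) then show ?case using Astep by simp
  qed
  have K3_0: "K3 \<ge> 0" unfolding K3_def using K0 Lpos dpos by simp
  define B where "B = K3 * L powr (-\<delta>)"
  define a where "a = exp (A 2)"
  have "\<forall>n\<ge>2. \<bar>\<psi> n / (a * ln (real n) powr (- 1 / 2)) - 1\<bar> \<le> (K3 * exp B) * ln (real n) powr (- min c \<epsilon>)"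
  proof (intro allI impI)
    fix n :: nat assume n: "n \<ge> 2"
    define l where "l = ln (real n)"
    have lp: "l > 0" and lL: "l \<ge> L" unfolding l_def using lnpos[OF n] lnge[OF n] by auto
    define t where "t = h n - A 2"
    have tb: "\<bar>t\<bar> \<le> K3 * l powr (-\<delta>)"
    proof -
      have "t = - (\<Sum>i. d (2 ^ i * n))" unfolding t_def using Aconst[OF n] unfolding A_def by linarith
      then show ?thesis using tail[OF n] unfolding l_def by simp
    qed
    have "l powr (-\<delta>) \<le> L powr (-\<delta>)" using lL Lpos dpos by (intro powr_mono2') auto
    then have tB: "\<bar>t\<bar> \<le> B" unfolding B_def using tb K3_0 by (meson mult_left_mono order_trans)
    have ex: "\<psi> n / (a * l powr (- 1 / 2)) = exp t"
    proof -
      have "exp (h n) = \<psi> n * exp (ln l / 2)" unfolding h_def l_def using pos[of n] by (simp add: exp_add)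
      also have "exp (ln l / 2) = l powr (1/2)" using lp by (simp add: powr_def)
      finally have "exp t = \<psi> n * l powr (1/2) / a" unfolding t_def a_def by (simp add: exp_diff)
      moreover have "l powr (- 1 / 2) = 1 / l powr (1/2)" using lp by (simp add: powr_minus_divide)
      ultimately show ?thesis by simp
    qed
    have "\<bar>exp t - 1\<bar> \<le> \<bar>t\<bar> * exp \<bar>t\<bar>" by (rule exp_sub_one_bound)
    also have "\<dots> \<le> (K3 * l powr (-\<delta>)) * exp B" using tb tB by (intro mult_mono) auto
    finally show "\<bar>\<psi> n / (a * ln (real n) powr (- 1 / 2)) - 1\<bar> \<le> (K3 * exp B) * ln (real n) powr (- min c \<epsilon>)"
      unfolding ex[unfolded l_def] \<delta>_def l_def by (simp add: algebra_simps)
  qed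
  moreover have "a > 0" unfolding a_def by simp
  ultimately show ?thesis by blast
qed

end
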